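(* Let $(X,\mathcal{X},\mu)$ be a probability space, $(Y,\mathcal{Y})$ a measurable space, $f\colon X\to Y$ a measurable function, and $\mu_f=\mu\circ\mathit{pre}_f\colon\mathcal{Y}\to[0,1]$ the output probability measure. Let $\mathit{pre}^\sharp_f\colon\wp(Y)\to\wp(X)$ satisfy $\mathit{pre}_f(A)\subseteq\mathit{pre}^\sharp_f(A)$ for all $A\subseteq Y$, and let $\uparrow\colon\wp(X)\to\mathcal{X}$ be an abstraction. Define $\mu^\sharp_f=\mu\circ\uparrow\circ\,\mathit{pre}^\sharp_f$, $\mathit{pre}'^\flat_f(A)=X\setminus\uparrow\big(\mathit{pre}^\sharp_f(Y\setminus A)\big)$, and $\mu^\flat_f=\mu\circ\mathit{pre}'^\flat_f$. Then for all $A\in\mathcal{Y}$, $\mu^\flat_f(A)\le\mu_f(A)$ and $\mu^\flat_f(A)=1-\mu^\sharp_f(Y\setminus A)$. Furthermore, if $\mathit{pre}^\sharp_f$ and $\uparrow$ are monotone, then $\mu^\flat_f$ is monotone.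
   Context: For $f\colon X\to Y$, $\mathit{pre}_f(B)=\{x\in X\mid f(x)\in B\}$; $f$ is measurable if $\mathit{pre}_f(B)\in\mathcal{X}$ for all $B\in\mathcal{Y}$. Functions are total (every $x\in X$ has an image $f(x)$). An abstraction is a function $\uparrow\colon\wp(X)\to\mathcal{X}$ with $S\subseteq\,\uparrow(S)$ for all $S\subseteq X$. A set function is monotone if $A\subseteq B$ implies $g(A)\subseteq g(B)$ (resp. $g(A)\le g(B)$). *)

theory Defs
  imports "HOL-Probability.Probability"
begin

definition pre :: "'a measure \<Rightarrow> ('a \<Rightarrow> 'b) \<Rightarrow> 'b set \<Rightarrow> 'a set" where
  "pre M f B = {x \<in> space M. f x \<in> B}"

definition abstraction :: "'a measure \<Rightarrow> ('a set \<Rightarrow> 'a set) \<Rightarrow> bool" where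
  "abstraction M up \<longleftrightarrow> (\<forall>S. S \<subseteq> space M \<longrightarrow> up S \<in> sets M \<and> S \<subseteq> up S)"

definition mu_f :: "'a measure \<Rightarrow> ('a \<Rightarrow> 'b) \<Rightarrow> 'b set \<Rightarrow> real" where
  "mu_f M f A = measure M (pre M f A)"

definition mu_sharp :: "'a measure \<Rightarrow> ('a set \<Rightarrow> 'a set) \<Rightarrow> ('b set \<Rightarrow> 'a set) \<Rightarrow> 'b set \<Rightarrow> real" where
  "mu_sharp M up preS A = measure M (up (preS A))"

definition pre_flat :: "'a measure \<Rightarrow> 'b measure \<Rightarrow> ('a set \<Rightarrow> 'a set) \<Rightarrow> ('b set \<Rightarrow> 'a set) \<Rightarrow> 'b set \<Rightarrow> 'a set" where
  "pre_flat M N up preS A = space M - up (preS (space N - A))"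

definition mu_flat :: "'a measure \<Rightarrow> 'b measure \<Rightarrow> ('a set \<Rightarrow> 'a set) \<Rightarrow> ('b set \<Rightarrow> 'a set) \<Rightarrow> 'b set \<Rightarrow> real" where
  "mu_flat M N up preS A = measure M (pre_flat M N up preS A)"

end

theory Submission
  imports Defs
begin

theorem theorem2:
  fixes M :: "'a measure" and N :: "'b measure" and f :: "'a \<Rightarrow> 'b"
    and preS :: "'b set \<Rightarrow> 'a set" and up :: "'a set \<Rightarrow> 'a set"
  assumes "prob_space M"
    and "f \<in> M \<rightarrow>\<^sub>M N"
    and "\<forall>A. A \<subseteq> space N \<longrightarrow> preS A \<subseteq> space M"
    and "\<forall>A. A \<subseteq> space N \<longrightarrow> pre M f A \<subseteq> preS A"
    and "abstraction M up"
  shows "(\<forall>A \<in> sets N. mu_flat M N up preS A \<le> mu_f M f A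
            \<and> mu_flat M N up preS A = 1 - mu_sharp M up preS (space N - A))
         \<and> ((\<forall>A B. A \<subseteq> B \<and> B \<subseteq> space N \<longrightarrow> preS A \<subseteq> preS B)
            \<and> (\<forall>S T. S \<subseteq> T \<and> T \<subseteq> space M \<longrightarrow> up S \<subseteq> up T)
            \<longrightarrow> (\<forall>A B. A \<subseteq> B \<and> B \<subseteq> space N \<longrightarrow> mu_flat M N up preS A \<le> mu_flat M N up preS B))"
proof -
  interpret P: prob_space M by fact
  have upC: "up (preS C) \<in> sets M" "preS C \<subseteq> up (preS C)" if "C \<subseteq> space N" for C
    using assms(3,5) that unfolding abstraction_def by blast+
  have part1: "mu_flat M N up preS A \<le> mu_f M f A
            \<and> mu_flat M N up preS A = 1 - mu_sharp M up preS (space N - A)"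
    if A: "A \<in> sets N" for A
  proof
    let ?C = "space N - A"
    have C: "?C \<subseteq> space N" by blast
    have sub: "pre_flat M N up preS A \<subseteq> pre M f A"
    proof
      fix x assume x: "x \<in> pre_flat M N up preS A"
      then have xm: "x \<in> space M" and nx: "x \<notin> up (preS ?C)" unfolding pre_flat_def by auto
      have "x \<notin> pre M f ?C" using nx upC(2)[OF C] assms(4) C by blast
      moreover have "f x \<in> space N" using assms(2) xm by (meson measurable_space)
      ultimately show "x \<in> pre M f A" using xm unfolding pre_def by auto
    qed
    have pm: "pre M f A \<in> sets M"
      proof -
      have "pre M f A = f -` A \<inter> space M" unfolding pre_def by auto
      then show ?thesis using measurable_sets[OF assms(2) A] by simp
    qed
    show "mu_flat M N up preS A \<le> mu_f M f A"
      unfolding mu_flat_def mu_f_def using sub pm by (simp add: P.finite_measure_mono)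
    show "mu_flat M N up preS A = 1 - mu_sharp M up preS (space N - A)"
      unfolding mu_flat_def mu_sharp_def pre_flat_def using P.prob_compl[OF upC(1)[OF C]] by simp
  qed
  have part2: "mu_flat M N up preS A \<le> mu_flat M N up preS B"
    if mp: "\<forall>A B. A \<subseteq> B \<and> B \<subseteq> space N \<longrightarrow> preS A \<subseteq> preS B"
      and mu: "\<forall>S T. S \<subseteq> T \<and> T \<subseteq> space M \<longrightarrow> up S \<subseteq> up T"
      and AB: "A \<subseteq> B" "B \<subseteq> space N" for A B
  proof -
    have s1: "preS (space N - B) \<subseteq> preS (space N - A)" using mp[rule_format, of "space N - B" "space N - A"] AB by blast
    have s2: "preS (space N - A) \<subseteq> space M" using assms(3) by blast
    have "up (preS (space N - B)) \<subseteq> up (preS (space N - A))" using mu[rule_format, of "preS (space N - B)" "preS (space N - A)"] s1 s2 by blast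
    then have "pre_flat M N up preS A \<subseteq> pre_flat M N up preS B" unfolding pre_flat_def by blast
    moreover have "pre_flat M N up preS B \<in> sets M" unfolding pre_flat_def
      using upC(1)[of "space N - B"] by blast
    ultimately show ?thesis unfolding mu_flat_def by (simp add: P.finite_measure_mono)
  qed
  show ?thesis
  proof (intro conjI impI)
    show "\<forall>A \<in> sets N. mu_flat M N up preS A \<le> mu_f M f A
            \<and> mu_flat M N up preS A = 1 - mu_sharp M up preS (space N - A)"
      using part1 by (intro ballI)
  next
    assume h: "(\<forall>A B. A \<subseteq> B \<and> B \<subseteq> space N \<longrightarrow> preS A \<subseteq> preS B)
            \<and> (\<forall>S T. S \<subseteq> T \<and> T \<subseteq> space M \<longrightarrow> up S \<subseteq> up T)"
    show "\<forall>A B. A \<subseteq> B \<and> B \<subseteq> space N \<longrightarrow> mu_flat M N up preS A \<le> mu_flat M N up preS B"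
    proof (intro allI impI)
      fix A B assume "A \<subseteq> B \<and> B \<subseteq> space N"
      then show "mu_flat M N up preS A \<le> mu_flat M N up preS B"
        using part2[OF conjunct1[OF h] conjunct2[OF h]] by blast
    qed
  qed
qed

end
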